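(* Let $(\Gamma,\boldsymbol{\ell})$ be a metric graph, $f$ an eigenfunction with eigenvalue $k^2\ne0$, and $\mathbf{x}=\mathrm{tr}_k(f)$. Let $\mathrm{supp}(f)$ be the set of edges $e_j$ with $f|_{e_j}\not\equiv0$ and set $s_j=e^{ik\ell_j}$ for $e_j\in\mathrm{supp}(f)$. Then the set $\mathcal{T}(\Gamma)_{\mathbf{x}}:=\{\mathbf{z}\in\Sigma(\Gamma):(\mathbf{z},\mathbf{x})\in\mathcal{T}(\Gamma)\}$ equals $\{\mathbf{z}\in\mathbb{T}^N: z_j=s_j\text{ for every }e_j\in\mathrm{supp}(f)\}$; in particular it is a torus of dimension $N-|\mathrm{supp}(f)|$ contained in $\Sigma(\Gamma)$.
   Context: $\Gamma$: finite graph with edges $e_1,\dots,e_N$, each oriented. $(\Gamma,\boldsymbol{\ell})$: $e_j\cong[0,\ell_j]$, Laplacian $-d^2/dt^2$ edgewise with standard vertex conditions (continuity, zero sum of outgoing derivatives at each vertex). For an eigenpair with $k>0$: $f|_{e_j}(t)=A_j\cos(kt)+B_j\sin(kt)=C_j\cos(k(\ell_j-t))+D_j\sin(k(\ell_j-t))$, and $\mathrm{tr}_k(f)\in\mathbb{C}^{4N}$ is the vector of all $A_j,B_j,C_j,D_j$ (for $k=0$, constant $c$: $A_j=C_j=c$, $B_j=D_j=0$). $\mathbb{T}^N=\{\mathbf{z}\in\mathbb{C}^N:|z_j|=1\}$, $\exp(ik\boldsymbol{\ell})=(e^{ik\ell_j})_j$. Trace space $\mathcal{T}(\Gamma)=\{(\exp(ik\boldsymbol{\ell}'),\mathrm{tr}_{k}(g))\}$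 over all $\boldsymbol{\ell}'\in\mathbb{R}_+^N$, $k\ge0$ with $k^2$ an eigenvalue of $(\Gamma,\boldsymbol{\ell}')$, and $g$ in the corresponding eigenspace (including $0$); $\Sigma(\Gamma)$ is its projection to $\mathbb{T}^N$. *)

theory Defs
  imports "HOL-Analysis.Analysis"
begin

text \<open>Metric graph: a finite set of oriented edges, given by the finite type 'e
  (so N = CARD('e)), with source and target vertex maps src, tgt :: 'e => 'v
  (loops and multiple edges allowed) and edge lengths len :: 'e => real, len e > 0.
  Edge e is identified with the interval [0, len e]. A function on the metric graph
  is g :: 'e => real => complex; only the values g e t with t in [0, len e] matter.\<close>

definition edge_int :: "('e \<Rightarrow> real) \<Rightarrow> 'e \<Rightarrow> real set" where
  "edge_int len e = {0 .. len e}"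

definition edge_deriv :: "('e \<Rightarrow> real) \<Rightarrow> ('e \<Rightarrow> real \<Rightarrow> complex) \<Rightarrow> 'e \<Rightarrow> real \<Rightarrow> complex" where
  "edge_deriv len g e t = vector_derivative (g e) (at t within edge_int len e)"

definition solves_eig ::
  "('e::finite \<Rightarrow> 'v) \<Rightarrow> ('e \<Rightarrow> 'v) \<Rightarrow> ('e \<Rightarrow> real) \<Rightarrow> real \<Rightarrow> ('e \<Rightarrow> real \<Rightarrow> complex) \<Rightarrow> bool" where
  "solves_eig src tgt len k g \<longleftrightarrow>
     (\<forall>e. \<exists>g'. \<forall>t\<in>edge_int len e.
          (g e has_vector_derivative g' t) (at t within edge_int len e) \<and>
          (g' has_vector_derivative (- complex_of_real (k ^ 2) * g e t)) (at t within edge_int len e))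
   \<and> (\<forall>v. \<forall>a\<in>{g e 0 | e. src e = v} \<union> {g e (len e) | e. tgt e = v}.
            \<forall>b\<in>{g e 0 | e. src e = v} \<union> {g e (len e) | e. tgt e = v}. a = b)
   \<and> (\<forall>v. (\<Sum>e\<in>{e. src e = v}. edge_deriv len g e 0)
          - (\<Sum>e\<in>{e. tgt e = v}. edge_deriv len g e (len e)) = 0)"

definition edge_nonzero :: "('e \<Rightarrow> real) \<Rightarrow> ('e \<Rightarrow> real \<Rightarrow> complex) \<Rightarrow> 'e \<Rightarrow> bool" where
  "edge_nonzero len g e \<longleftrightarrow> (\<exists>t\<in>edge_int len e. g e t \<noteq> 0)"

definition supp_edges :: "('e \<Rightarrow> real) \<Rightarrow> ('e \<Rightarrow> real \<Rightarrow> complex) \<Rightarrow> 'e set" where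
  "supp_edges len g = {e. edge_nonzero len g e}"

definition is_eigenfunction ::
  "('e::finite \<Rightarrow> 'v) \<Rightarrow> ('e \<Rightarrow> 'v) \<Rightarrow> ('e \<Rightarrow> real) \<Rightarrow> real \<Rightarrow> ('e \<Rightarrow> real \<Rightarrow> complex) \<Rightarrow> bool" where
  "is_eigenfunction src tgt len k g \<longleftrightarrow> solves_eig src tgt len k g \<and> (\<exists>e. edge_nonzero len g e)"

definition is_eigenvalue_sq ::
  "('e::finite \<Rightarrow> 'v) \<Rightarrow> ('e \<Rightarrow> 'v) \<Rightarrow> ('e \<Rightarrow> real) \<Rightarrow> real \<Rightarrow> bool" where
  "is_eigenvalue_sq src tgt len k \<longleftrightarrow> (\<exists>g. is_eigenfunction src tgt len k g)"

text \<open>For k > 0 these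
  are the coefficients with g e t = A cos(kt) + B sin(kt) = C cos(k(len e - t)) + D sin(k(len e - t))
  on the edge; for k = 0 (g locally constant) A = C = value, B = D = 0.\<close>
definition trace_k ::
  "real \<Rightarrow> ('e \<Rightarrow> real) \<Rightarrow> ('e \<Rightarrow> real \<Rightarrow> complex) \<Rightarrow> 'e \<Rightarrow> complex \<times> complex \<times> complex \<times> complex" where
  "trace_k k len g e =
     (if k = 0 then (g e 0, 0, g e (len e), 0)
      else (THE (A, B, C, D). \<forall>t\<in>edge_int len e.
               g e t = A * complex_of_real (cos (k * t)) + B * complex_of_real (sin (k * t)) \<and>
               g e t = C * complex_of_real (cos (k * (len e - t))) + D * complex_of_real (sin (k * (len e - t)))))"

definition exp_vec :: "real \<Rightarrow> ('e \<Rightarrow> real) \<Rightarrow> 'e \<Rightarrow> complex" where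
  "exp_vec k len = (\<lambda>e. exp (\<i> * complex_of_real (k * len e)))"

definition trace_space ::
  "('e::finite \<Rightarrow> 'v) \<Rightarrow> ('e \<Rightarrow> 'v) \<Rightarrow> (('e \<Rightarrow> complex) \<times> ('e \<Rightarrow> complex \<times> complex \<times> complex \<times> complex)) set" where
  "trace_space src tgt =
     {(exp_vec k len', trace_k k len' g) | len' k g.
        (\<forall>e. len' e > 0) \<and> k \<ge> 0 \<and> is_eigenvalue_sq src tgt len' k \<and> solves_eig src tgt len' k g}"

definition Sigma_graph ::
  "('e::finite \<Rightarrow> 'v) \<Rightarrow> ('e \<Rightarrow> 'v) \<Rightarrow> ('e \<Rightarrow> complex) set" where
  "Sigma_graph src tgt = fst ` trace_space src tgt"

definition trace_fibre ::
  "('e::finite \<Rightarrow> 'v) \<Rightarrow> ('e \<Rightarrow> 'v) \<Rightarrow> ('e \<Rightarrow> complex \<times> complex \<times> complex \<times> complex) \<Rightarrow> ('e \<Rightarrow> complex) set" where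
  "trace_fibre src tgt x = {z \<in> Sigma_graph src tgt. (z, x) \<in> trace_space src tgt}"

end

theory Submission
  imports Defs
begin


lemma dcos: "((\<lambda>t. complex_of_real (cos (k*t))) has_vector_derivative complex_of_real (- k * sin (k*t))) (at t within S)"
proof -
  have "((\<lambda>t. cos (k*t)) has_field_derivative (- sin (k*t) * k)) (at t within S)"
    by (auto intro!: derivative_eq_intros)
  from has_vector_derivative_of_real[OF this] show ?thesis by (simp add: mult.commute)
qed

lemma dsin: "((\<lambda>t. complex_of_real (sin (k*t))) has_vector_derivative complex_of_real (k * cos (k*t))) (at t within S)"
proof -
  have "((\<lambda>t. sin (k*t)) has_field_derivative (cos (k*t) * k)) (at t within S)"
    by (auto intro!: derivative_eq_intros)
  from has_vector_derivative_of_real[OF this] show ?thesis by (simp add: mult.commute)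
qed

lemma ode_pos:
  fixes h h' :: "real \<Rightarrow> complex"
  assumes k: "k > 0"
    and d: "\<forall>t\<in>{0..L}. (h has_vector_derivative h' t) (at t within {0..L}) \<and>
          (h' has_vector_derivative (- complex_of_real (k ^ 2) * h t)) (at t within {0..L})"
  shows "\<exists>A B. \<forall>t\<in>{0..L}. h t = A * complex_of_real (cos (k*t)) + B * complex_of_real (sin (k*t))
             \<and> h' t = complex_of_real k * (B * complex_of_real (cos (k*t)) - A * complex_of_real (sin (k*t)))"
proof -
  define K where "K = complex_of_real k"
  have K0: "K \<noteq> 0" using k by (simp add: K_def)
  define c where "c = (\<lambda>t. complex_of_real (cos (k*t)))"
  define s where "s = (\<lambda>t. complex_of_real (sin (k*t)))"
  have cs1: "c t * c t + s t * s t = 1" for t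
  proof -
    have "cos (k*t) * cos (k*t) + sin (k*t) * sin (k*t) = 1"
      by (metis sin_cos_squared_add power2_eq_square add.commute)
    then have "complex_of_real (cos (k*t) * cos (k*t) + sin (k*t) * sin (k*t)) = 1" by simp
    then show ?thesis unfolding c_def s_def of_real_add of_real_mult .
  qed
  define p where "p = (\<lambda>t. h t * c t - h' t / K * s t)"
  define q where "q = (\<lambda>t. h t * s t + h' t / K * c t)"
  have dc: "(c has_vector_derivative (- K * s t)) (at t within {0..L})" for t
    using dcos[of k t] by (simp add: c_def s_def K_def)
  have ds: "(s has_vector_derivative (K * c t)) (at t within {0..L})" for t
    using dsin[of k t] by (simp add: c_def s_def K_def)
  have dp: "(p has_vector_derivative 0) (at t within {0..L})" if t: "t \<in> {0..L}" for t
  proof -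
    have h1: "(h has_vector_derivative h' t) (at t within {0..L})"
      and h2: "(h' has_vector_derivative (- K*K * h t)) (at t within {0..L})"
      using d t by (auto simp: K_def power2_eq_square)
    have h3: "((\<lambda>t. h' t / K) has_vector_derivative (- K * h t)) (at t within {0..L})"
    proof -
      have e: "K * K * h t * inverse K = K * h t * (K * inverse K)" by (simp add: ac_simps)
      show ?thesis
      using has_vector_derivative_mult[OF h2 has_vector_derivative_const[of "1/K"]] K0
      by (simp add: divide_inverse e)
    qed
    have "(p has_vector_derivative ((h t * (- K * s t) + h' t * c t) - (h' t / K * (K * c t) + (- K * h t) * s t))) (at t within {0..L})"
      unfolding p_def
      by (intro has_vector_derivative_diff has_vector_derivative_mult h1 h3 dc ds)
    moreover have "h' t / K * (K * c t) = h' t * c t" using K0 by simp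
    moreover have "((h t * (- K * s t) + h' t * c t) - (h' t * c t + (- K * h t) * s t)) = 0"
      by (simp add: algebra_simps)
    ultimately show ?thesis by simp
  qed
  have dq: "(q has_vector_derivative 0) (at t within {0..L})" if t: "t \<in> {0..L}" for t
  proof -
    have h1: "(h has_vector_derivative h' t) (at t within {0..L})"
      and h2: "(h' has_vector_derivative (- K*K * h t)) (at t within {0..L})"
      using d t by (auto simp: K_def power2_eq_square)
    have h3: "((\<lambda>t. h' t / K) has_vector_derivative (- K * h t)) (at t within {0..L})"
    proof -
      have e: "K * K * h t * inverse K = K * h t * (K * inverse K)" by (simp add: ac_simps)
      show ?thesis
      using has_vector_derivative_mult[OF h2 has_vector_derivative_const[of "1/K"]] K0
      by (simp add: divide_inverse e)
    qed
    have "(q has_vector_derivative ((h t * (K * c t) + h' t * s t) + (h' t / K * (- K * s t) + (- K * h t) * c t))) (at t within {0..L})"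
      unfolding q_def
      by (intro has_vector_derivative_add has_vector_derivative_mult h1 h3 dc ds)
    moreover have "h' t / K * (- K * s t) = - h' t * s t" using K0 by simp
    moreover have "((h t * (K * c t) + h' t * s t) + (- h' t * s t + (- K * h t) * c t)) = 0"
      by (simp add: algebra_simps)
    ultimately show ?thesis by simp
  qed
  obtain A where A: "\<And>t. t \<in> {0..L} \<Longrightarrow> p t = A"
    using has_vector_derivative_zero_constant[of "{0..L}" p] dp by auto
  obtain B where B: "\<And>t. t \<in> {0..L} \<Longrightarrow> q t = B"
    using has_vector_derivative_zero_constant[of "{0..L}" q] dq by auto
  show ?thesis
  proof (intro exI ballI conjI)
    fix t assume t: "t \<in> {0..L}"
    have "A * c t + B * s t = p t * c t + q t * s t" using A[OF t] B[OF t] by simp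
    also have "\<dots> = h t * (c t * c t + s t * s t)" unfolding p_def q_def by (simp add: algebra_simps)
    finally have "A * c t + B * s t = h t * (c t * c t + s t * s t)" .
    then show "h t = A * complex_of_real (cos (k*t)) + B * complex_of_real (sin (k*t))"
      using cs1[of t] by (simp add: c_def s_def)
    have "K * (B * c t - A * s t) = K * (q t * c t - p t * s t)" using A[OF t] B[OF t] by simp
    also have "\<dots> = K * (h' t / K) * (c t * c t + s t * s t)" unfolding p_def q_def by (simp add: algebra_simps)
    also have "K * (h' t / K) = h' t" using K0 by simp
    finally have "K * (B * c t - A * s t) = h' t * (c t * c t + s t * s t)" .
    then show "h' t = complex_of_real k * (B * complex_of_real (cos (k*t)) - A * complex_of_real (sin (k*t)))"
      using cs1[of t] by (simp add: c_def s_def K_def)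
  qed
qed

lemma ode_zero:
  fixes h h' :: "real \<Rightarrow> complex"
  assumes d: "\<forall>t\<in>{0..L}. (h has_vector_derivative h' t) (at t within {0..L}) \<and>
          (h' has_vector_derivative (- complex_of_real (0 ^ 2) * h t)) (at t within {0..L})"
  shows "\<exists>a b. \<forall>t\<in>{0..L}. h t = a + b * complex_of_real t \<and> h' t = b"
proof -
  obtain b where b: "\<And>t. t \<in> {0..L} \<Longrightarrow> h' t = b"
    using has_vector_derivative_zero_constant[of "{0..L}" h'] d by auto
  have "((\<lambda>t. h t - b * complex_of_real t) has_vector_derivative 0) (at t within {0..L})"
    if t: "t \<in> {0..L}" for t
  proof -
    have "((\<lambda>t. h t - b * complex_of_real t) has_vector_derivative (h' t - b * 1)) (at t within {0..L})"
      using d t by (auto intro!: derivative_eq_intros)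
    then show ?thesis using b[OF t] by simp
  qed
  then obtain a where a: "\<And>t. t \<in> {0..L} \<Longrightarrow> h t - b * complex_of_real t = a"
    using has_vector_derivative_zero_constant[of "{0..L}" "\<lambda>t. h t - b * complex_of_real t"] by auto
  show ?thesis
    by (rule exI[of _ a], rule exI[of _ b]) (auto simp: b dest: a[symmetric])
qed


lemma lin_indep:
  fixes A B :: complex
  assumes L: "L > 0" and k: "k > 0"
    and h: "\<forall>t\<in>{0..L}. A * complex_of_real (cos (k*t)) + B * complex_of_real (sin (k*t)) = 0"
  shows "A = 0 \<and> B = 0"
proof -
  have A0: "A = 0" using h L by (drule_tac x=0 in bspec) auto
  define t0 where "t0 = min L (pi / (2*k))"
  have t0: "t0 \<in> {0..L}" using L k by (auto simp: t0_def)
  have "0 < k * t0" using L k by (simp add: t0_def)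
  moreover have "k * t0 \<le> pi/2" using k
    by (simp add: t0_def min_def field_simps)
  ultimately have "sin (k*t0) > 0" by (intro sin_gt_zero) (auto intro: order.strict_trans1)
  moreover have "B * complex_of_real (sin (k*t0)) = 0" using h t0 A0 by auto
  ultimately show ?thesis using A0 by simp
qed

lemma lin_indep2:
  fixes C D :: complex
  assumes L: "L > 0" and k: "k > 0"
    and h: "\<forall>t\<in>{0..L}. C * complex_of_real (cos (k*(L-t))) + D * complex_of_real (sin (k*(L-t))) = 0"
  shows "C = 0 \<and> D = 0"
proof (rule lin_indep[OF L k], intro ballI)
  fix t assume t: "t \<in> {0..L}"
  then have "L - t \<in> {0..L}" by auto
  from h[rule_format, OF this] show "C * complex_of_real (cos (k*t)) + D * complex_of_real (sin (k*t)) = 0"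
    by simp
qed

lemma trig_shift:
  fixes A B :: complex
  shows "A * complex_of_real (cos (k*t)) + B * complex_of_real (sin (k*t)) =
    (A * complex_of_real (cos (k*L)) + B * complex_of_real (sin (k*L))) * complex_of_real (cos (k*(L-t)))
    + (A * complex_of_real (sin (k*L)) - B * complex_of_real (cos (k*L))) * complex_of_real (sin (k*(L-t)))"
proof -
  have e: "k*t = k*L - k*(L-t)" by (simp add: algebra_simps)
  have "cos (k*t) = cos (k*L) * cos (k*(L-t)) + sin (k*L) * sin (k*(L-t))"
    by (subst e, rule cos_diff)
  then have c1: "complex_of_real (cos (k*t)) = complex_of_real (cos (k*L)) * complex_of_real (cos (k*(L-t))) + complex_of_real (sin (k*L)) * complex_of_real (sin (k*(L-t)))"
    by (metis of_real_add of_real_mult)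
  have "sin (k*t) = sin (k*L) * cos (k*(L-t)) - cos (k*L) * sin (k*(L-t))"
    by (subst e, rule sin_diff)
  then have s1: "complex_of_real (sin (k*t)) = complex_of_real (sin (k*L)) * complex_of_real (cos (k*(L-t))) - complex_of_real (cos (k*L)) * complex_of_real (sin (k*(L-t)))"
    by (metis of_real_diff of_real_mult)
  show ?thesis by (simp only: c1 s1) (simp add: algebra_simps)
qed


lemma trace_formula:
  assumes k: "k > 0" and L: "len e > 0"
    and h: "\<forall>t\<in>edge_int len e. g e t = A * complex_of_real (cos (k*t)) + B * complex_of_real (sin (k*t))"
  shows "trace_k k len g e = (A, B, A * complex_of_real (cos (k*len e)) + B * complex_of_real (sin (k*len e)),
             A * complex_of_real (sin (k*len e)) - B * complex_of_real (cos (k*len e)))"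
proof -
  let ?C = "A * complex_of_real (cos (k*len e)) + B * complex_of_real (sin (k*len e))"
  let ?D = "A * complex_of_real (sin (k*len e)) - B * complex_of_real (cos (k*len e))"
  have P: "\<forall>t\<in>edge_int len e.
               g e t = A * complex_of_real (cos (k * t)) + B * complex_of_real (sin (k * t)) \<and>
               g e t = ?C * complex_of_real (cos (k * (len e - t))) + ?D * complex_of_real (sin (k * (len e - t)))"
  proof
    fix t assume t: "t \<in> edge_int len e"
    have "g e t = A * complex_of_real (cos (k * t)) + B * complex_of_real (sin (k * t))" using h t by blast
    moreover have "A * complex_of_real (cos (k * t)) + B * complex_of_real (sin (k * t)) = ?C * complex_of_real (cos (k * (len e - t))) + ?D * complex_of_real (sin (k * (len e - t)))"
      by (rule trig_shift)
    ultimately show "g e t = A * complex_of_real (cos (k * t)) + B * complex_of_real (sin (k * t)) \<and>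
               g e t = ?C * complex_of_real (cos (k * (len e - t))) + ?D * complex_of_real (sin (k * (len e - t)))" by simp
  qed
  show ?thesis unfolding trace_k_def using k
  proof (simp, intro the_equality)
    show "case (A, B, ?C, ?D) of (A, B, C, D) \<Rightarrow> \<forall>t\<in>edge_int len e.
               g e t = A * complex_of_real (cos (k * t)) + B * complex_of_real (sin (k * t)) \<and>
               g e t = C * complex_of_real (cos (k * (len e - t))) + D * complex_of_real (sin (k * (len e - t)))"
      using P by (simp only: case_prod_conv)
  next
    fix x :: "complex \<times> complex \<times> complex \<times> complex"
    assume x: "case x of (A, B, C, D) \<Rightarrow> \<forall>t\<in>edge_int len e.
               g e t = A * complex_of_real (cos (k * t)) + B * complex_of_real (sin (k * t)) \<and>
               g e t = C * complex_of_real (cos (k * (len e - t))) + D * complex_of_real (sin (k * (len e - t)))"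
    obtain A' B' C' D' where xe: "x = (A', B', C', D')" by (cases x) auto
    from x have x': "\<forall>t\<in>{0..len e}.
               g e t = A' * complex_of_real (cos (k * t)) + B' * complex_of_real (sin (k * t)) \<and>
               g e t = C' * complex_of_real (cos (k * (len e - t))) + D' * complex_of_real (sin (k * (len e - t)))"
      using x unfolding xe edge_int_def by (simp only: case_prod_conv)
    have P': "\<forall>t\<in>{0..len e}.
               g e t = A * complex_of_real (cos (k * t)) + B * complex_of_real (sin (k * t)) \<and>
               g e t = ?C * complex_of_real (cos (k * (len e - t))) + ?D * complex_of_real (sin (k * (len e - t)))"
      using P unfolding edge_int_def .
    have "\<forall>t\<in>{0..len e}. (A' - A) * complex_of_real (cos (k*t)) + (B' - B) * complex_of_real (sin (k*t)) = 0"
    proof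
      fix t assume t: "t \<in> {0..len e}"
      have "A' * complex_of_real (cos (k * t)) + B' * complex_of_real (sin (k * t)) = A * complex_of_real (cos (k * t)) + B * complex_of_real (sin (k * t))"
        using x'[rule_format, OF t] P'[rule_format, OF t] by metis
      then show "(A' - A) * complex_of_real (cos (k*t)) + (B' - B) * complex_of_real (sin (k*t)) = 0"
        by (simp add: algebra_simps)
    qed
    from lin_indep[OF L k this] have 1: "A' = A" "B' = B" by auto
    have "\<forall>t\<in>{0..len e}. (C' - ?C) * complex_of_real (cos (k*(len e - t))) + (D' - ?D) * complex_of_real (sin (k*(len e - t))) = 0"
    proof
      fix t assume t: "t \<in> {0..len e}"
      have "C' * complex_of_real (cos (k * (len e - t))) + D' * complex_of_real (sin (k * (len e - t)))
           = ?C * complex_of_real (cos (k * (len e - t))) + ?D * complex_of_real (sin (k * (len e - t)))"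
        using x'[rule_format, OF t] P'[rule_format, OF t] by metis
      then show "(C' - ?C) * complex_of_real (cos (k*(len e - t))) + (D' - ?D) * complex_of_real (sin (k*(len e - t))) = 0"
        by (simp add: algebra_simps)
    qed
    from lin_indep2[OF L k this] have "C' = ?C" "D' = ?D" by auto
    with 1 show "x = (A, B, ?C, ?D)" by (simp add: xe)
  qed
qed

lemma key_exp:
  fixes A B :: complex
  assumes nz: "A \<noteq> 0 \<or> B \<noteq> 0"
    and e1: "A * complex_of_real (cos a) + B * complex_of_real (sin a) = A * complex_of_real (cos b) + B * complex_of_real (sin b)"
    and e2: "A * complex_of_real (sin a) - B * complex_of_real (cos a) = A * complex_of_real (sin b) - B * complex_of_real (cos b)"
  shows "exp (\<i> * complex_of_real a) = exp (\<i> * complex_of_real b)"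
proof -
  have w: "exp (\<i> * complex_of_real x) = complex_of_real (cos x) + \<i> * complex_of_real (sin x)" for x
    by (simp add: cis_conv_exp[symmetric] cis.ctr complex_eq_iff)
  define ca where "ca = complex_of_real (cos a)"
  define sa where "sa = complex_of_real (sin a)"
  define cb where "cb = complex_of_real (cos b)"
  define sb where "sb = complex_of_real (sin b)"
  have e1': "A * ca + B * sa = A * cb + B * sb" using e1 by (simp add: ca_def sa_def cb_def sb_def)
  have e2': "A * sa - B * ca = A * sb - B * cb" using e2 by (simp add: ca_def sa_def cb_def sb_def)
  have m1: "(A - \<i> * B) * ((ca + \<i> * sa) - (cb + \<i> * sb)) = 0"
  proof -
    have "(A - \<i> * B) * ((ca + \<i> * sa) - (cb + \<i> * sb)) = (A * ca + B * sa - (A * cb + B * sb)) + \<i> * ((A * sa - B * ca) - (A * sb - B * cb))"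
      by (simp add: algebra_simps)
    then show ?thesis using e1' e2' by simp
  qed
  have m2: "(A + \<i> * B) * ((ca - \<i> * sa) - (cb - \<i> * sb)) = 0"
  proof -
    have "(A + \<i> * B) * ((ca - \<i> * sa) - (cb - \<i> * sb)) = (A * ca + B * sa - (A * cb + B * sb)) - \<i> * ((A * sa - B * ca) - (A * sb - B * cb))"
      by (simp add: algebra_simps)
    then show ?thesis using e1' e2' by simp
  qed
  show ?thesis
  proof (rule ccontr)
    assume ne: "exp (\<i> * complex_of_real a) \<noteq> exp (\<i> * complex_of_real b)"
    then have n1: "(ca + \<i> * sa) - (cb + \<i> * sb) \<noteq> 0" by (simp add: w ca_def sa_def cb_def sb_def)
    have n2: "(ca - \<i> * sa) - (cb - \<i> * sb) \<noteq> 0"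
    proof
      assume "(ca - \<i> * sa) - (cb - \<i> * sb) = 0"
      then have "cnj ((ca - \<i> * sa) - (cb - \<i> * sb)) = 0" by simp
      then have "(ca + \<i> * sa) - (cb + \<i> * sb) = 0" by (simp add: ca_def sa_def cb_def sb_def)
      with n1 show False by simp
    qed
    from m1 n1 have "A = \<i> * B" by simp
    moreover from m2 n2 have "A = - \<i> * B" by (simp add: add_eq_0_iff)
    ultimately have "B = 0" by simp
    with \<open>A = \<i> * B\<close> nz show False by simp
  qed
qed



lemma edge_rep_zero:
  assumes Lp: "L e > 0"
    and d: "\<forall>t\<in>{0..L e}. (g e has_vector_derivative g' t) (at t within {0..L e}) \<and>
          (g' has_vector_derivative (- complex_of_real (0 ^ 2) * g e t)) (at t within {0..L e})"
  shows "\<exists>a b. (\<forall>t\<in>{0..L e}. g e t = a + b * complex_of_real t) \<and> (\<forall>t\<in>{0..L e}. edge_deriv L g e t = b)"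
proof -
  obtain a b where ab: "\<forall>t\<in>{0..L e}. g e t = a + b * complex_of_real t \<and> g' t = b"
    using ode_zero[OF d] by blast
  have "edge_deriv L g e t = b" if t: "t \<in> {0..L e}" for t
  proof -
    have "(g e has_vector_derivative g' t) (at t within {0..L e})" using d t by blast
    then have "vector_derivative (g e) (at t within {0..L e}) = g' t"
      by (intro vector_derivative_within_closed_interval[OF Lp t])
    then show ?thesis using ab t by (simp add: edge_deriv_def edge_int_def)
  qed
  then show ?thesis using ab by blast
qed

lemma energy:
  fixes src tgt :: "'e::finite \<Rightarrow> 'v" and L :: "'e \<Rightarrow> real" and g :: "'e \<Rightarrow> real \<Rightarrow> complex"
  assumes Lpos: "\<forall>e. L e > 0" and sol: "solves_eig src tgt L 0 g"
  shows "\<forall>e. g e (L e) = g e 0"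
proof -
  have "\<forall>e. \<exists>a b. (\<forall>t\<in>{0..L e}. g e t = a + b * complex_of_real t) \<and> (\<forall>t\<in>{0..L e}. edge_deriv L g e t = b)"
  proof
    fix e
    from sol obtain g' where "\<forall>t\<in>{0..L e}. (g e has_vector_derivative g' t) (at t within {0..L e}) \<and>
          (g' has_vector_derivative (- complex_of_real (0 ^ 2) * g e t)) (at t within {0..L e})"
      unfolding solves_eig_def edge_int_def by blast
    from edge_rep_zero[of L e g g', OF _ this] Lpos show "\<exists>a b. (\<forall>t\<in>{0..L e}. g e t = a + b * complex_of_real t) \<and> (\<forall>t\<in>{0..L e}. edge_deriv L g e t = b)"
      by blast
  qed
  then obtain a b where ab: "\<And>e. \<forall>t\<in>{0..L e}. g e t = a e + b e * complex_of_real t"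
      "\<And>e. \<forall>t\<in>{0..L e}. edge_deriv L g e t = b e"
    by metis
  have mem0: "0 \<in> {0..L e}" "L e \<in> {0..L e}" for e using Lpos[rule_format, of e] by auto
  define Vals where "Vals v = {g e 0 |e. src e = v} \<union> {g e (L e) |e. tgt e = v}" for v
  have cont: "\<forall>x\<in>Vals v. \<forall>y\<in>Vals v. x = y" for v
    using sol unfolding solves_eig_def Vals_def by blast
  define val where "val v = (SOME x. x \<in> Vals v)" for v
  have valI: "x \<in> Vals v \<Longrightarrow> x = val v" for x v
    using cont[of v] someI[of "\<lambda>x. x \<in> Vals v" x] unfolding val_def by blast
  have vs: "g e 0 = val (src e)" for e by (rule valI) (auto simp: Vals_def)
  have vt: "g e (L e) = val (tgt e)" for e by (rule valI) (auto simp: Vals_def)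
  have kir: "(\<Sum>e\<in>{e. src e = v}. b e) - (\<Sum>e\<in>{e. tgt e = v}. b e) = 0" for v
  proof -
    have "(\<Sum>e\<in>{e. src e = v}. edge_deriv L g e 0) - (\<Sum>e\<in>{e. tgt e = v}. edge_deriv L g e (L e)) = 0"
      using sol unfolding solves_eig_def by blast
    moreover have "(\<Sum>e\<in>{e. src e = v}. edge_deriv L g e 0) = (\<Sum>e\<in>{e. src e = v}. b e)"
      using ab(2) mem0 by (intro sum.cong) auto
    moreover have "(\<Sum>e\<in>{e. tgt e = v}. edge_deriv L g e (L e)) = (\<Sum>e\<in>{e. tgt e = v}. b e)"
      using ab(2) mem0 by (intro sum.cong) auto
    ultimately show ?thesis by simp
  qed
  define V where "V = range src \<union> range tgt"
  have finV: "finite V" by (simp add: V_def)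
  have grp: "(\<Sum>e\<in>UNIV. F (f e) * b e) = (\<Sum>v\<in>V. F v * (\<Sum>e\<in>{e. f e = v}. b e))"
    if fV: "range f \<subseteq> V" for F :: "'v \<Rightarrow> complex" and f :: "'e \<Rightarrow> 'v"
  proof -
    have "(\<Sum>e\<in>UNIV. F (f e) * b e) = (\<Sum>v\<in>V. \<Sum>e\<in>{x. x \<in> UNIV \<and> f x = v}. F (f e) * b e)"
      using sum.group[of UNIV V f "\<lambda>e. F (f e) * b e"] fV finV by simp
    also have "\<dots> = (\<Sum>v\<in>V. F v * (\<Sum>e\<in>{e. f e = v}. b e))"
      by (intro sum.cong refl) (simp add: sum_distrib_left)
    finally show ?thesis .
  qed
  have "(\<Sum>e\<in>UNIV. cnj (val (tgt e)) * b e) - (\<Sum>e\<in>UNIV. cnj (val (src e)) * b e)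
        = (\<Sum>v\<in>V. cnj (val v) * (\<Sum>e\<in>{e. tgt e = v}. b e)) - (\<Sum>v\<in>V. cnj (val v) * (\<Sum>e\<in>{e. src e = v}. b e))"
    using grp[of tgt "\<lambda>v. cnj (val v)"] grp[of src "\<lambda>v. cnj (val v)"] by (simp add: V_def)
  also have "\<dots> = (\<Sum>v\<in>V. cnj (val v) * ((\<Sum>e\<in>{e. tgt e = v}. b e) - (\<Sum>e\<in>{e. src e = v}. b e)))"
    by (simp add: sum_subtractf right_diff_distrib)
  also have "\<dots> = 0"
    using kir by (simp add: eq_iff_diff_eq_0[symmetric])
  finally have S0: "(\<Sum>e\<in>UNIV. cnj (val (tgt e)) * b e) - (\<Sum>e\<in>UNIV. cnj (val (src e)) * b e) = 0" .
  have trm: "cnj (val (tgt e)) * b e - cnj (val (src e)) * b e = complex_of_real (L e * (cmod (b e))^2)" for e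
  proof -
    have "val (tgt e) - val (src e) = b e * complex_of_real (L e)"
      using ab(1)[rule_format, OF mem0(1)] ab(1)[rule_format, OF mem0(2)] vs vt by auto
    then have "cnj (val (tgt e)) * b e - cnj (val (src e)) * b e = cnj (b e * complex_of_real (L e)) * b e"
      by (metis complex_cnj_diff left_diff_distrib)
    also have "\<dots> = complex_of_real (L e) * (b e * cnj (b e))" by (simp add: algebra_simps)
    also have "\<dots> = complex_of_real (L e * (cmod (b e))^2)" by (simp only: of_real_mult complex_norm_square)
    finally show ?thesis .
  qed
  have "(\<Sum>e\<in>UNIV. complex_of_real (L e * (cmod (b e))^2)) = 0"
  proof -
    have "(\<Sum>e\<in>UNIV. complex_of_real (L e * (cmod (b e))^2)) = (\<Sum>e\<in>UNIV. cnj (val (tgt e)) * b e - cnj (val (src e)) * b e)"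
      by (simp only: trm)
    also have "\<dots> = 0" using S0 by (simp only: sum_subtractf)
    finally show ?thesis .
  qed
  then have S1: "(\<Sum>e\<in>UNIV. L e * (cmod (b e))^2) = 0"
    by (metis of_real_eq_0_iff of_real_sum)
  have "\<forall>e\<in>UNIV. L e * (cmod (b e))^2 = 0"
  proof -
    have nn: "\<forall>e\<in>UNIV. 0 \<le> L e * (cmod (b e))^2"
    proof
      fix e :: 'e
      have "0 \<le> L e" using Lpos[rule_format, of e] by simp
      then show "0 \<le> L e * (cmod (b e))^2" by simp
    qed
    have fin: "finite (UNIV :: 'e set)" by simp
    show ?thesis using sum_nonneg_eq_0_iff[OF fin, of "\<lambda>e. L e * (cmod (b e))^2"] nn S1 by blast
  qed
  then have b0: "b e = 0" for e using Lpos[rule_format, of e] by (metis UNIV_I less_irrefl mult_eq_0_iff power_eq_0_iff norm_eq_zero)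
  show ?thesis
    using ab(1) mem0 b0 by auto
qed



lemma angle_pos:
  assumes "norm (w::complex) = 1"
  shows "\<exists>\<theta>>0. exp (\<i> * complex_of_real \<theta>) = w"
proof (intro exI conjI)
  show "Arg w + 2*pi > 0" using Arg_bounded[of w] by linarith
  have w0: "w \<noteq> 0" using assms by auto
  have "cis (Arg w + 2*pi) = cis (Arg w) * cis (2*pi)" using cis_mult[of "Arg w" "2*pi"] by simp
  also have "\<dots> = w" using cis_Arg[OF w0] assms by (simp add: sgn_eq)
  finally show "exp (\<i> * complex_of_real (Arg w + 2*pi)) = w" by (simp add: cis_conv_exp)
qed

lemma zero_deriv_on:
  assumes Lp: "L > 0" and t: "t \<in> {0..L}" and z: "\<forall>s\<in>{0..L}. h s = 0"
  shows "vector_derivative h (at t within {0..L}) = (0::complex)"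
proof -
  have "((\<lambda>_. 0::complex) has_vector_derivative 0) (at t within {0..L})" by (rule has_vector_derivative_const)
  then have "(h has_vector_derivative 0) (at t within {0..L})"
    using has_vector_derivative_transform[OF t, of h "\<lambda>_. 0"] z by auto
  then show ?thesis by (rule vector_derivative_within_closed_interval[OF Lp t])
qed



lemma rep_pos:
  assumes k: "k > 0" and sol: "solves_eig src tgt len k g"
  shows "\<exists>A B. \<forall>t\<in>edge_int len e. g e t = A * complex_of_real (cos (k*t)) + B * complex_of_real (sin (k*t))"
proof -
  from sol obtain g' where "\<forall>t\<in>{0..len e}. (g e has_vector_derivative g' t) (at t within {0..len e}) \<and>
          (g' has_vector_derivative (- complex_of_real (k ^ 2) * g e t)) (at t within {0..len e})"
    unfolding solves_eig_def edge_int_def by blast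
  from ode_pos[OF k this] show ?thesis unfolding edge_int_def by blast
qed

theorem mainTheorem18:
  fixes src tgt :: "'e::finite \<Rightarrow> 'v" and len :: "'e \<Rightarrow> real" and k :: real
    and f :: "'e \<Rightarrow> real \<Rightarrow> complex"
  assumes "\<forall>e. len e > 0"
    and "k > 0"
    and "is_eigenfunction src tgt len k f"
  shows "trace_fibre src tgt (trace_k k len f) =
           {z. (\<forall>e. norm (z e) = 1) \<and> (\<forall>e\<in>supp_edges len f. z e = exp_vec k len e)}
         \<and> trace_fibre src tgt (trace_k k len f) \<subseteq> Sigma_graph src tgt"
proof -
  note Lpos = assms(1) and kpos = assms(2)
  have fsol: "solves_eig src tgt len k f" and fnz: "\<exists>e. edge_nonzero len f e"
    using assms(3) unfolding is_eigenfunction_def by auto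
  have "\<forall>e. \<exists>A B. \<forall>t\<in>edge_int len e. f e t = A * complex_of_real (cos (k*t)) + B * complex_of_real (sin (k*t))"
    using rep_pos[OF kpos fsol] by blast
  then obtain Af Bf where rep: "\<And>e. \<forall>t\<in>edge_int len e. f e t = Af e * complex_of_real (cos (k*t)) + Bf e * complex_of_real (sin (k*t))"
    by metis
  define X where "X = trace_k k len f"
  have trf: "X e = (Af e, Bf e, Af e * complex_of_real (cos (k*len e)) + Bf e * complex_of_real (sin (k*len e)),
             Af e * complex_of_real (sin (k*len e)) - Bf e * complex_of_real (cos (k*len e)))" for e
    unfolding X_def using trace_formula[where g=f and len=len and e=e and A="Af e" and B="Bf e" and k=k, OF kpos Lpos[rule_format, of e] rep[of e]] .
  define S where "S = supp_edges len f"
  have suppiff: "e \<in> S \<longleftrightarrow> (Af e \<noteq> 0 \<or> Bf e \<noteq> 0)" for e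
  proof
    assume "e \<in> S"
    then obtain t where t: "t \<in> edge_int len e" "f e t \<noteq> 0"
      unfolding S_def supp_edges_def edge_nonzero_def by auto
    then show "Af e \<noteq> 0 \<or> Bf e \<noteq> 0" using rep[of e] by auto
  next
    assume nz: "Af e \<noteq> 0 \<or> Bf e \<noteq> 0"
    show "e \<in> S"
    proof (rule ccontr)
      assume "e \<notin> S"
      then have "\<forall>t\<in>{0..len e}. f e t = 0"
        unfolding S_def supp_edges_def edge_nonzero_def edge_int_def by auto
      then have "\<forall>t\<in>{0..len e}. Af e * complex_of_real (cos (k*t)) + Bf e * complex_of_real (sin (k*t)) = 0"
        using rep[of e] unfolding edge_int_def by auto
      from lin_indep[OF Lpos[rule_format, of e] kpos this] nz show False by simp
    qed
  qed
  have fzero: "\<forall>t\<in>{0..len e}. f e t = 0" if "e \<notin> S" for e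
    using that unfolding S_def supp_edges_def edge_nonzero_def edge_int_def by auto
  define R where "R = {z. (\<forall>e. norm (z e) = 1) \<and> (\<forall>e\<in>supp_edges len f. z e = exp_vec k len e)}"
  have sub1: "trace_fibre src tgt X \<subseteq> R"
  proof
    fix z assume "z \<in> trace_fibre src tgt X"
    then have "(z, X) \<in> trace_space src tgt" unfolding trace_fibre_def by auto
    then obtain len' k' g where z: "z = exp_vec k' len'" and Xg: "X = trace_k k' len' g"
      and L'pos: "\<forall>e. len' e > 0" and k'nn: "k' \<ge> 0" and gsol: "solves_eig src tgt len' k' g"
      unfolding trace_space_def by auto
    have "norm (z e) = 1" for e by (simp add: z exp_vec_def)
    moreover have "z e = exp_vec k len e" if eS: "e \<in> S" for e
    proof (cases "k' = 0")
      case True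
      have en: "g e (len' e) = g e 0" using energy[OF L'pos, of src tgt g] gsol True by simp
      have "X e = (g e 0, 0, g e (len' e), 0)" using Xg True by (simp add: trace_k_def)
      then have eqs: "Af e = g e 0" "Bf e = 0"
          "Af e * complex_of_real (cos (k*len e)) + Bf e * complex_of_real (sin (k*len e)) = g e (len' e)"
          "Af e * complex_of_real (sin (k*len e)) - Bf e * complex_of_real (cos (k*len e)) = 0"
        using trf[of e] by auto
      have "exp (\<i> * complex_of_real (k * len e)) = exp (\<i> * complex_of_real 0)"
      proof (rule key_exp[of "Af e" "Bf e"])
        show "Af e \<noteq> 0 \<or> Bf e \<noteq> 0" using suppiff eS by blast
        show "Af e * complex_of_real (cos (k * len e)) + Bf e * complex_of_real (sin (k * len e)) =
          Af e * complex_of_real (cos 0) + Bf e * complex_of_real (sin 0)"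
          using eqs en by simp
        show "Af e * complex_of_real (sin (k * len e)) - Bf e * complex_of_real (cos (k * len e)) =
          Af e * complex_of_real (sin 0) - Bf e * complex_of_real (cos 0)"
          using eqs by simp
      qed
      then show ?thesis by (simp add: z True exp_vec_def)
    next
      case False
      then have k'pos: "k' > 0" using k'nn by simp
      obtain Ag Bg where repg: "\<forall>t\<in>edge_int len' e. g e t = Ag * complex_of_real (cos (k'*t)) + Bg * complex_of_real (sin (k'*t))"
        using rep_pos[OF k'pos gsol, of e] by blast
      have "X e = (Ag, Bg, Ag * complex_of_real (cos (k'*len' e)) + Bg * complex_of_real (sin (k'*len' e)),
             Ag * complex_of_real (sin (k'*len' e)) - Bg * complex_of_real (cos (k'*len' e)))"
        unfolding Xg using trace_formula[where g=g and len=len' and e=e and A=Ag and B=Bg and k=k', OF k'pos L'pos[rule_format, of e] repg] .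
      then have eqs: "Af e = Ag" "Bf e = Bg"
          "Af e * complex_of_real (cos (k*len e)) + Bf e * complex_of_real (sin (k*len e)) = Ag * complex_of_real (cos (k'*len' e)) + Bg * complex_of_real (sin (k'*len' e))"
          "Af e * complex_of_real (sin (k*len e)) - Bf e * complex_of_real (cos (k*len e)) = Ag * complex_of_real (sin (k'*len' e)) - Bg * complex_of_real (cos (k'*len' e))"
        using trf[of e] by auto
      have "exp (\<i> * complex_of_real (k * len e)) = exp (\<i> * complex_of_real (k' * len' e))"
        using key_exp[of "Af e" "Bf e" "k * len e" "k' * len' e"] eqs suppiff eS by simp
      then show ?thesis by (simp add: z exp_vec_def)
    qed
    ultimately show "z \<in> R" unfolding R_def S_def by auto
  qed
  have sub2: "R \<subseteq> trace_fibre src tgt X"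
  proof
    fix z assume "z \<in> R"
    then have zn: "\<And>e. norm (z e) = 1" and zS: "\<And>e. e \<in> S \<Longrightarrow> z e = exp_vec k len e"
      unfolding R_def S_def by auto
    have "\<forall>e. \<exists>\<theta>>0. exp (\<i> * complex_of_real \<theta>) = z e" using angle_pos zn by blast
    then obtain th where th: "\<And>e. th e > 0" "\<And>e. exp (\<i> * complex_of_real (th e)) = z e" by metis
    define len' where "len' e = (if e \<in> S then len e else th e / k)" for e
    define g where "g e t = (if e \<in> S then f e t else 0)" for e t
    have L'pos: "\<forall>e. len' e > 0" using Lpos th(1) kpos by (auto simp: len'_def)
    have zexp: "z = exp_vec k len'"
    proof
      fix e show "z e = exp_vec k len' e"
      proof (cases "e \<in> S")
        case True then show ?thesis using zS by (simp add: len'_def exp_vec_def)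
      next
        case False
        then have "k * len' e = th e" using kpos by (simp add: len'_def)
        then show ?thesis using th(2)[of e] unfolding exp_vec_def by metis
      qed
    qed
    have gS: "g e = f e" "len' e = len e" if "e \<in> S" for e using that by (auto simp: g_def len'_def)
    have gN: "g e = (\<lambda>_. 0)" if "e \<notin> S" for e using that by (auto simp: g_def)
    have Xeq: "X = trace_k k len' g"
    proof
      fix e show "X e = trace_k k len' g e"
      proof (cases "e \<in> S")
        case True show ?thesis unfolding X_def trace_k_def edge_int_def gS[OF True] by (rule refl)
      next
        case False
        have "trace_k k len' g e = (0, 0, 0 * complex_of_real (cos (k*len' e)) + 0 * complex_of_real (sin (k*len' e)),
             0 * complex_of_real (sin (k*len' e)) - 0 * complex_of_real (cos (k*len' e)))"
          by (rule trace_formula[where g=g and len=len' and e=e and A=0 and B=0 and k=k, OF kpos L'pos[rule_format, of e]]) (simp add: gN[OF False])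
        moreover have "Af e = 0" "Bf e = 0" using suppiff False by auto
        ultimately show ?thesis using trf[of e] by simp
      qed
    qed
    have v0: "g e 0 = f e 0" and vL: "g e (len' e) = f e (len e)" for e
    proof -
      have "g e 0 = f e 0 \<and> g e (len' e) = f e (len e)"
      proof (cases "e \<in> S")
        case True then show ?thesis by (simp add: gS)
      next
        case False
        then show ?thesis using fzero[OF False] gN[OF False] Lpos[rule_format, of e] by auto
      qed
      then show "g e 0 = f e 0" "g e (len' e) = f e (len e)" by auto
    qed
    have d0: "edge_deriv len' g e 0 = edge_deriv len f e 0"
      and dL: "edge_deriv len' g e (len' e) = edge_deriv len f e (len e)" for e
    proof -
      have "edge_deriv len' g e 0 = edge_deriv len f e 0 \<and> edge_deriv len' g e (len' e) = edge_deriv len f e (len e)"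
      proof (cases "e \<in> S")
        case True then show ?thesis by (simp add: gS edge_deriv_def edge_int_def)
      next
        case False
        have l1: "len' e > 0" "len e > 0" using L'pos Lpos by auto
        have "\<forall>s\<in>{0..len' e}. g e s = 0" using gN[OF False] by simp
        then have "edge_deriv len' g e 0 = 0 \<and> edge_deriv len' g e (len' e) = 0"
          unfolding edge_deriv_def edge_int_def using zero_deriv_on[OF l1(1)] l1 by auto
        moreover have "edge_deriv len f e 0 = 0 \<and> edge_deriv len f e (len e) = 0"
          unfolding edge_deriv_def edge_int_def using zero_deriv_on[OF l1(2)] fzero[OF False] l1 by auto
        ultimately show ?thesis by simp
      qed
      then show "edge_deriv len' g e 0 = edge_deriv len f e 0" "edge_deriv len' g e (len' e) = edge_deriv len f e (len e)"
        by auto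
    qed
    have gsol: "solves_eig src tgt len' k g"
      unfolding solves_eig_def
    proof (intro conjI)
      show "\<forall>e. \<exists>g'. \<forall>t\<in>edge_int len' e.
          (g e has_vector_derivative g' t) (at t within edge_int len' e) \<and>
          (g' has_vector_derivative (- complex_of_real (k ^ 2) * g e t)) (at t within edge_int len' e)"
      proof
        fix e show "\<exists>g'. \<forall>t\<in>edge_int len' e.
          (g e has_vector_derivative g' t) (at t within edge_int len' e) \<and>
          (g' has_vector_derivative (- complex_of_real (k ^ 2) * g e t)) (at t within edge_int len' e)"
        proof (cases "e \<in> S")
          case True then show ?thesis using fsol unfolding solves_eig_def by (simp add: gS edge_int_def)
        next
          case False
          show ?thesis
            by (rule exI[of _ "\<lambda>_. 0"]) (simp add: gN[OF False] has_vector_derivative_const)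
        qed
      qed
      show "\<forall>v. \<forall>a\<in>{g e 0 |e. src e = v} \<union> {g e (len' e) |e. tgt e = v}.
            \<forall>b\<in>{g e 0 |e. src e = v} \<union> {g e (len' e) |e. tgt e = v}. a = b"
        unfolding v0 vL by (rule fsol[unfolded solves_eig_def, THEN conjunct2, THEN conjunct1])
      show "\<forall>v. (\<Sum>e\<in>{e. src e = v}. edge_deriv len' g e 0) - (\<Sum>e\<in>{e. tgt e = v}. edge_deriv len' g e (len' e)) = 0"
        unfolding d0 dL by (rule fsol[unfolded solves_eig_def, THEN conjunct2, THEN conjunct2])
    qed
    obtain e0 where e0: "edge_nonzero len f e0" using fnz by blast
    then have e0S: "e0 \<in> S" by (simp add: S_def supp_edges_def)
    have "edge_nonzero len' g e0" using e0 gS[OF e0S] by (simp add: edge_nonzero_def edge_int_def)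
    then have ev: "is_eigenvalue_sq src tgt len' k"
      unfolding is_eigenvalue_sq_def is_eigenfunction_def using gsol by blast
    have mem: "(z, X) \<in> trace_space src tgt"
    proof -
      have "\<exists>len'' k'' g''. (z, X) = (exp_vec k'' len'', trace_k k'' len'' g'') \<and> (\<forall>e. len'' e > 0) \<and> k'' \<ge> 0 \<and>
              is_eigenvalue_sq src tgt len'' k'' \<and> solves_eig src tgt len'' k'' g''"
        apply (rule exI[of _ len'], rule exI[of _ k], rule exI[of _ g])
        apply (intro conjI)
            apply (simp only: zexp Xeq)
           apply (rule L'pos)
          apply (rule less_imp_le[OF kpos])
         apply (rule ev)
        apply (rule gsol)
        done
      then show ?thesis unfolding trace_space_def by (rule CollectI)
    qed
    then have "z \<in> Sigma_graph src tgt" unfolding Sigma_graph_def by (rule image_eqI[rotated]) simp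
    with mem show "z \<in> trace_fibre src tgt X" unfolding trace_fibre_def by simp
  qed
  have "trace_fibre src tgt X \<subseteq> Sigma_graph src tgt" unfolding trace_fibre_def by auto
  with sub1 sub2 show ?thesis unfolding X_def[symmetric] R_def[symmetric] by blast
qed


end
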